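(* Let $i\in\{1,\dots,N\}$, $k\ne y_i$, and $\delta>0$. If $u_i\le\log(1+e^{x_i^\top(w_k-w_{y_i})})-\delta$, then replacing $u_i$ by $\log(1+e^{x_i^\top(w_k-w_{y_i})})$ (keeping all other coordinates of $u$ and $W$ fixed) decreases $f(u,W)$ by at least $\delta^2/2$.
   Context: Data: $(y_i,x_i)$, $i=1,\dots,N$, $x_i\in\mathbb{R}^D$, $y_i\in\{1,\dots,K\}$, $K\ge 2$; $\mu\ge0$; $u\in\mathbb{R}^N$, $W=[w_1,\dots,w_K]\in\mathbb{R}^{D\times K}$ with Frobenius norm $\|W\|_2$; $$f(u,W)=\sum_{i=1}^N\Big[u_i+e^{-u_i}+\sum_{k\ne y_i}e^{x_i^\top(w_k-w_{y_i})-u_i}\Big]+\tfrac{\mu}{2}\|W\|_2^2.$$ *)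

theory Defs
  imports "HOL-Analysis.Analysis"
begin

text \<open>Samples indexed by 1..N, classes by 1..K;
  x i :: real^'d, y i \<in> {1..K}, W k = w_k :: real^'d, u i :: real.
  The squared Frobenius norm of W = [w_1..w_K] is the sum of squared norms of its columns.\<close>
definition obj :: "nat \<Rightarrow> nat \<Rightarrow> (nat \<Rightarrow> real^'d) \<Rightarrow> (nat \<Rightarrow> nat) \<Rightarrow> real
    \<Rightarrow> (nat \<Rightarrow> real) \<Rightarrow> (nat \<Rightarrow> real^'d) \<Rightarrow> real" where
  "obj N K x y \<mu> u W =
     (\<Sum>i=1..N. u i + exp (- u i)
        + (\<Sum>k\<in>{1..K} - {y i}. exp (x i \<bullet> (W k - W (y i)) - u i)))
     + \<mu> / 2 * (\<Sum>k=1..K. (norm (W k))\<^sup>2)"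

end

theory Submission
  imports Defs
begin

lemma exp_quad: "(t::real) \<ge> 0 \<Longrightarrow> exp t \<ge> 1 + t + t^2/2"
  by (rule exp_lower_Taylor_quadratic)

theorem lemma5:
  fixes N K :: nat and x :: "nat \<Rightarrow> real^'d" and y :: "nat \<Rightarrow> nat"
    and \<mu> :: real and u :: "nat \<Rightarrow> real" and W :: "nat \<Rightarrow> real^'d"
    and i k :: nat and \<delta> :: real
  assumes "K \<ge> 2" and "\<mu> \<ge> 0"
    and "\<forall>j\<in>{1..N}. y j \<in> {1..K}"
    and "i \<in> {1..N}" and "k \<in> {1..K}" and "k \<noteq> y i"
    and "\<delta> > 0"
    and "u i \<le> ln (1 + exp (x i \<bullet> (W k - W (y i)))) - \<delta>"
  shows "obj N K x y \<mu> (u(i := ln (1 + exp (x i \<bullet> (W k - W (y i)))))) W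
           \<le> obj N K x y \<mu> u W - \<delta>\<^sup>2 / 2"
proof -
  define A where "A = exp (x i \<bullet> (W k - W (y i)))"
  define L where "L = ln (1 + A)"
  define S where "S = (\<Sum>j\<in>{1..K} - {y i}. exp (x i \<bullet> (W j - W (y i))))"
  define g where "g = (\<lambda>v. v + exp (- v) + (\<Sum>j\<in>{1..K} - {y i}. exp (x i \<bullet> (W j - W (y i)) - v)))"
  define h where "h = (\<lambda>u' j. u' j + exp (- u' j)
        + (\<Sum>kk\<in>{1..K} - {y j}. exp (x j \<bullet> (W kk - W (y j)) - u' j)))"
  define u' where "u' = u(i := L)"
  have Apos: "A > 0" unfolding A_def by simp
  have eL: "exp L = 1 + A" unfolding L_def using Apos by simp
  have SA: "S \<ge> A"
    unfolding S_def A_def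
    by (rule member_le_sum) (use assms(5,6) in auto)
  have gS: "\<And>v. g v = v + exp (- v) * (1 + S)"
    unfolding g_def S_def by (simp add: exp_diff sum_distrib_left sum_divide_distrib exp_minus field_simps)
  define t where "t = L - u i"
  have t: "t \<ge> \<delta>" using assms(8) unfolding t_def L_def A_def by simp
  have key: "g L \<le> g (u i) - \<delta>^2/2"
  proof -
    have e1: "exp (- u i) = exp t * exp (- L)" unfolding t_def by (simp add: exp_diff exp_minus field_simps)
    have eml: "exp (- L) * (1 + A) = 1" using eL Apos by (simp add: exp_minus)
    have "exp (- u i) - exp (- L) \<ge> 0" proof -
      have "- L \<le> - u i" using t assms(7) unfolding t_def by linarith
      hence "exp (- L) \<le> exp (- u i)" by (rule exp_mono)
      thus ?thesis by linarith
    qed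
    hence "(exp (- u i) - exp (- L)) * (1 + S) \<ge> (exp (- u i) - exp (- L)) * (1 + A)"
      using SA by (intro mult_left_mono) auto
    also have "(exp (- u i) - exp (- L)) * (1 + A) = exp t - 1"
      using e1 eml by (simp add: algebra_simps)
    finally have "(exp (- u i) - exp (- L)) * (1 + S) \<ge> exp t - 1" .
    moreover have "exp t \<ge> 1 + t + t^2/2" using exp_quad t assms(7) by simp
    moreover have "t^2 \<ge> \<delta>^2" using t assms(7) by (intro power_mono) auto
    ultimately show ?thesis unfolding gS t_def by (simp add: algebra_simps)
  qed
  have hu: "h u i = g (u i)" and hu': "h u' i = g L"
    unfolding h_def g_def u'_def by simp_all
  have fin: "finite {1..N}" by simp
  have s1: "(\<Sum>j=1..N. h u j) = h u i + (\<Sum>j\<in>{1..N}-{i}. h u j)"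
    using sum.remove[OF fin assms(4)] by simp
  have s2: "(\<Sum>j=1..N. h u' j) = h u' i + (\<Sum>j\<in>{1..N}-{i}. h u' j)"
    using sum.remove[OF fin assms(4)] by simp
  have s3: "(\<Sum>j\<in>{1..N}-{i}. h u' j) = (\<Sum>j\<in>{1..N}-{i}. h u j)"
    by (rule sum.cong) (auto simp: h_def u'_def)
  have "obj N K x y \<mu> u' W = (\<Sum>j=1..N. h u' j) + \<mu> / 2 * (\<Sum>k=1..K. (norm (W k))\<^sup>2)"
    unfolding obj_def h_def ..
  moreover have "obj N K x y \<mu> u W = (\<Sum>j=1..N. h u j) + \<mu> / 2 * (\<Sum>k=1..K. (norm (W k))\<^sup>2)"
    unfolding obj_def h_def ..
  ultimately have "obj N K x y \<mu> u' W \<le> obj N K x y \<mu> u W - \<delta>\<^sup>2 / 2"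
    using s1 s2 s3 hu hu' key by simp
  thus ?thesis unfolding u'_def L_def A_def .
qed

end
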